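(* Let $n$ be a positive integer and let $C$ be a connected component of $\Gamma(\mathsf{hypo}_n)$, with highest weight vertex $h$ and lowest weight vertex $l$. Then there is an automorphism of $C$ as an unlabelled undirected graph that maps $h$ to $l$.
   Context: Words are over the alphabet $\{1,\dots,n\}$. Quasi-Kashiwara operators for $1\le i\le n-1$: if a word $u$ contains a (not necessarily consecutive) subsequence $(i+1)\,i$, then $e_i(u)$ and $f_i(u)$ are undefined; otherwise $e_i(u)$ replaces the leftmost $i+1$ of $u$ by $i$ (undefined if there is no $i+1$) and $f_i(u)$ replaces the rightmost $i$ by $i+1$ (undefined if there is no $i$). $\Gamma(\mathsf{hypo}_n)$ is the directed graph with vertex set all words over $\{1,\dots,n\}$ and an edge $u\to f_i(u)$ labelled $i$ whenever $f_i(u)$ is defined. A highest weight vertex is one on which no $e_i$ is defined, and a lowest weight vertex is one on which no $f_i$ is defined; each connected component of $\Gamma(\mathsf{hypo}_n)$ has exactly one of each. *)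

theory Defs
  imports Main
begin

definition is_word :: "nat \<Rightarrow> nat list \<Rightarrow> bool" where
  "is_word n u \<longleftrightarrow> set u \<subseteq> {1..n}"

definition has_pattern :: "nat \<Rightarrow> nat list \<Rightarrow> bool" where
  "has_pattern i u \<longleftrightarrow> (\<exists>j k. j < k \<and> k < length u \<and> u ! j = i + 1 \<and> u ! k = i)"

definition e_op :: "nat \<Rightarrow> nat \<Rightarrow> nat list \<Rightarrow> nat list option" where
  "e_op n i u =
     (if 1 \<le> i \<and> i \<le> n - 1 \<and> \<not> has_pattern i u \<and> (i + 1) \<in> set u
      then Some (u[(LEAST j. j < length u \<and> u ! j = i + 1) := i])
      else None)"

definition f_op :: "nat \<Rightarrow> nat \<Rightarrow> nat list \<Rightarrow> nat list option" where
  "f_op n i u =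
     (if 1 \<le> i \<and> i \<le> n - 1 \<and> \<not> has_pattern i u \<and> i \<in> set u
      then Some (u[(GREATEST j. j < length u \<and> u ! j = i) := i + 1])
      else None)"

definition hypo_edge :: "nat \<Rightarrow> nat list \<Rightarrow> nat list \<Rightarrow> bool" where
  "hypo_edge n u v \<longleftrightarrow> is_word n u \<and> (\<exists>i. 1 \<le> i \<and> i \<le> n - 1 \<and> f_op n i u = Some v)"

definition hypo_adj :: "nat \<Rightarrow> nat list \<Rightarrow> nat list \<Rightarrow> bool" where
  "hypo_adj n u v \<longleftrightarrow> hypo_edge n u v \<or> hypo_edge n v u"

definition hypo_component :: "nat \<Rightarrow> nat list set \<Rightarrow> bool" where
  "hypo_component n C \<longleftrightarrow>
     (\<exists>u. is_word n u \<and> C = {v. (u, v) \<in> {(x, y). hypo_adj n x y}\<^sup>*})"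

definition highest_weight :: "nat \<Rightarrow> nat list \<Rightarrow> bool" where
  "highest_weight n u \<longleftrightarrow> (\<forall>i. 1 \<le> i \<and> i \<le> n - 1 \<longrightarrow> e_op n i u = None)"

definition lowest_weight :: "nat \<Rightarrow> nat list \<Rightarrow> bool" where
  "lowest_weight n u \<longleftrightarrow> (\<forall>i. 1 \<le> i \<and> i \<le> n - 1 \<longrightarrow> f_op n i u = None)"

definition is_undirected_aut :: "nat \<Rightarrow> nat list set \<Rightarrow> (nat list \<Rightarrow> nat list) \<Rightarrow> bool" where
  "is_undirected_aut n C \<phi> \<longleftrightarrow> bij_betw \<phi> C C \<and>
     (\<forall>u\<in>C. \<forall>v\<in>C. hypo_adj n u v \<longleftrightarrow> hypo_adj n (\<phi> u) (\<phi> v))"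

end

theory Submission
  imports Defs "HOL-Library.Product_Lexorder"
begin

definition Pl :: "nat list \<Rightarrow> nat list" where
  "Pl h = sort_key (\<lambda>p. (h!p, p)) [0..<length h]"

definition lt :: "nat list \<Rightarrow> nat \<Rightarrow> nat \<Rightarrow> bool" where
  "lt u a b \<longleftrightarrow> u!a < u!b \<or> (u!a = u!b \<and> a < b)"

definition inW :: "nat list \<Rightarrow> nat list \<Rightarrow> bool" where
  "inW h u \<longleftrightarrow> length u = length h \<and>
     (\<forall>j k. j < k \<longrightarrow> k < length h \<longrightarrow> lt u (Pl h ! j) (Pl h ! k))"

definition Dk :: "nat list \<Rightarrow> nat \<Rightarrow> nat" where
  "Dk h k = (if Pl h ! Suc k < Pl h ! k then 1 else 0)"

lemma Pl_props: "distinct (Pl h)" "set (Pl h) = {0..<length h}" "length (Pl h) = length h"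
  by (simp_all add: Pl_def)

lemma Pl_lt: "k < length h \<Longrightarrow> Pl h ! k < length h"
proof -
  assume k: "k < length h"
  have "Pl h ! k \<in> set (Pl h)" using k by (intro nth_mem) (simp only: Pl_props(3))
  then show ?thesis by (simp only: Pl_props(2) atLeastLessThan_iff)
qed

lemma Pl_inj: "j < length h \<Longrightarrow> k < length h \<Longrightarrow> Pl h ! j = Pl h ! k \<Longrightarrow> j = k"
  using Pl_props nth_eq_iff_index_eq by metis

lemma Pl_surj: "p < length h \<Longrightarrow> \<exists>k<length h. Pl h ! k = p"
  using Pl_props by (metis atLeastLessThan_iff in_set_conv_nth zero_le)

lemma inW_h: "inW h h"
  unfolding inW_def
proof (intro conjI allI impI)
  fix j k assume jk: "j < k" "k < length h"
  have s: "sorted (map (\<lambda>p. (h!p, p)) (Pl h))" by (simp add: Pl_def)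
  have lk: "k < length (map (\<lambda>p. (h!p, p)) (Pl h))" using jk(2) by (simp only: length_map Pl_props(3))
  have lj: "j < length (Pl h)" "k < length (Pl h)" using jk by (simp_all only: Pl_props(3))
  have "(map (\<lambda>p. (h!p, p)) (Pl h)) ! j \<le> (map (\<lambda>p. (h!p, p)) (Pl h)) ! k"
    using sorted_nth_mono[OF s _ lk, of j] jk(1) by simp
  then have le: "(h!(Pl h!j), Pl h!j) \<le> (h!(Pl h!k), Pl h!k)"
    by (simp only: nth_map lj)
  have jl: "j < length h" using jk by simp
  have "Pl h ! j \<noteq> Pl h ! k"
  proof
    assume "Pl h ! j = Pl h ! k"
    then have "j = k" using Pl_inj[OF jl jk(2)] by blast
    then show False using jk(1) by simp
  qed
  then show "lt h (Pl h ! j) (Pl h ! k)" using le unfolding lt_def by auto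
qed simp

lemma lt_trans: "lt u a b \<Longrightarrow> lt u b c \<Longrightarrow> lt u a c"
  unfolding lt_def by auto

lemma inW_lt: "inW h u \<Longrightarrow> j < k \<Longrightarrow> k < length h \<Longrightarrow> lt u (Pl h ! j) (Pl h ! k)"
  unfolding inW_def by blast

lemma inW_le: "inW h u \<Longrightarrow> j \<le> k \<Longrightarrow> k < length h \<Longrightarrow> u!(Pl h!j) \<le> u!(Pl h!k)"
  using inW_lt[of h u j k] unfolding lt_def by (cases "j = k") auto

lemma inW_le_pos: "inW h u \<Longrightarrow> j \<le> k \<Longrightarrow> k < length h \<Longrightarrow> u!(Pl h!j) = u!(Pl h!k)
   \<Longrightarrow> Pl h!j \<le> Pl h!k"
  using inW_lt[of h u j k] unfolding lt_def by (cases "j = k") auto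

lemma inW_step: "inW h u \<Longrightarrow> Suc k < length h \<Longrightarrow> u!(Pl h!k) + Dk h k \<le> u!(Pl h!Suc k)"
proof -
  assume a: "inW h u" "Suc k < length h"
  have "lt u (Pl h ! k) (Pl h ! Suc k)" using inW_lt[OF a(1) _ a(2), of k] by simp
  moreover have "Pl h ! k \<noteq> Pl h ! Suc k" using Pl_inj[of k h "Suc k"] a(2) by auto
  ultimately show ?thesis unfolding lt_def Dk_def by auto
qed

lemma inW_I:
  assumes len: "length u = length h"
    and st: "\<And>k. Suc k < length h \<Longrightarrow> u!(Pl h!k) + Dk h k \<le> u!(Pl h!Suc k)"
  shows "inW h u"
proof -
  have step: "lt u (Pl h ! k) (Pl h ! Suc k)" if "Suc k < length h" for k
  proof -
    have "Pl h ! k \<noteq> Pl h ! Suc k" using Pl_inj[of k h "Suc k"] that by auto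
    then show ?thesis using st[OF that] unfolding lt_def Dk_def
      by (cases "Pl h ! Suc k < Pl h ! k") auto
  qed
  have "\<forall>j. j < k \<longrightarrow> k < length h \<longrightarrow> lt u (Pl h ! j) (Pl h ! k)" for k
  proof (induction k)
    case 0 then show ?case by simp
  next
    case (Suc k)
    show ?case
    proof (intro allI impI)
      fix j assume j: "j < Suc k" "Suc k < length h"
      show "lt u (Pl h ! j) (Pl h ! Suc k)"
      proof (cases "j = k")
        case True then show ?thesis using step j by simp
      next
        case False
        then have "lt u (Pl h ! j) (Pl h ! k)" using Suc.IH j by simp
        then show ?thesis using step[OF j(2)] lt_trans by blast
      qed
    qed
  qed
  then show ?thesis unfolding inW_def using len by blast
qed

lemma list_eqI_P:
  assumes "length u = length h" "length v = length h"
    and "\<And>k. k < length h \<Longrightarrow> u!(Pl h!k) = v!(Pl h!k)"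
  shows "u = v"
proof (rule nth_equalityI)
  show "length u = length v" using assms by simp
  fix p assume "p < length u"
  then obtain k where "k < length h" "Pl h ! k = p" using Pl_surj assms(1) by metis
  then show "u ! p = v ! p" using assms(3) by blast
qed

lemma nopat:
  assumes W: "inW h u" and k: "Suc k < length h"
    and gap: "u!(Pl h!k) + Dk h k < u!(Pl h!Suc k)"
    and i1: "u!(Pl h!k) \<le> i" and i2: "i + 1 \<le> u!(Pl h!Suc k)"
  shows "\<not> has_pattern i u"
proof
  assume "has_pattern i u"
  then obtain a b where ab: "a < b" "b < length u" "u!a = i+1" "u!b = i"
    unfolding has_pattern_def by blast
  have lu: "length u = length h" using W inW_def by blast
  obtain ra where ra: "ra < length h" "Pl h ! ra = a" using Pl_surj ab lu
    by (metis order.strict_trans)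
  obtain rb where rb: "rb < length h" "Pl h ! rb = b" using Pl_surj ab lu by metis
  have rbk: "rb \<le> k"
  proof (rule ccontr)
    assume "\<not> rb \<le> k"
    then have "u!(Pl h!Suc k) \<le> u!b" using inW_le[OF W, of "Suc k" rb] rb by simp
    then show False using ab i2 by simp
  qed
  have ck: "u!(Pl h!k) = i" using inW_le[OF W rbk] rb ab i1 k by simp
  have rak: "Suc k \<le> ra"
  proof (rule ccontr)
    assume "\<not> Suc k \<le> ra"
    then have "u!a \<le> u!(Pl h!k)" using inW_le[OF W, of ra k] ra k by simp
    then show False using ab ck by simp
  qed
  have ck1: "u!(Pl h!Suc k) = i+1" using inW_le[OF W rak ra(1)] ra ab i2 by simp
  have D0: "Dk h k = 0" using gap ck ck1 by simp
  have ne: "Pl h ! k \<noteq> Pl h ! Suc k" using Pl_inj[of k h "Suc k"] k by auto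
  have "Pl h ! k < Pl h ! Suc k" using D0 ne unfolding Dk_def by (auto split: if_splits)
  moreover have "b \<le> Pl h ! k" using inW_le_pos[OF W rbk] rb ab ck k by simp
  moreover have "Pl h ! Suc k \<le> a" using inW_le_pos[OF W rak ra(1)] ra ab ck1 by simp
  ultimately show False using ab by simp
qed


lemma rmax:
  assumes "i \<in> set u"
  shows "(GREATEST j. j < length u \<and> u!j = i) < length u"
    "u!(GREATEST j. j < length u \<and> u!j = i) = i"
    "\<And>j. j < length u \<Longrightarrow> u!j = i \<Longrightarrow> j \<le> (GREATEST j. j < length u \<and> u!j = i)"
proof -
  obtain j0 where j0: "j0 < length u" "u!j0 = i" using assms in_set_conv_nth by metis
  have b: "\<And>y. y < length u \<and> u!y = i \<Longrightarrow> y \<le> length u" by simp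
  have "(\<lambda>j. j < length u \<and> u!j = i) (GREATEST j. j < length u \<and> u!j = i)"
    by (rule GreatestI_nat[of _ j0 "length u"]) (use j0 b in auto)
  then show "(GREATEST j. j < length u \<and> u!j = i) < length u"
    "u!(GREATEST j. j < length u \<and> u!j = i) = i" by auto
  fix j assume "j < length u" "u!j = i"
  then show "j \<le> (GREATEST j. j < length u \<and> u!j = i)"
    by (intro Greatest_le_nat[of _ j "length u"]) auto
qed

lemma f_op_E:
  assumes "f_op n i u = Some v"
  shows "1 \<le> i" "i \<le> n - 1" "\<not> has_pattern i u" "i \<in> set u"
    "v = u[(GREATEST j. j < length u \<and> u!j = i) := i+1]"
  using assms by (auto simp: f_op_def split: if_splits)

lemma nopat_D: "\<not> has_pattern i u \<Longrightarrow> a < b \<Longrightarrow> b < length u \<Longrightarrow> u!a = i+1 \<Longrightarrow> u!b = i \<Longrightarrow> False"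
  unfolding has_pattern_def by blast

lemma f_closed:
  assumes W: "inW h u" and f: "f_op n i u = Some v"
  shows "inW h v"
proof -
  define r where "r = (GREATEST j. j < length u \<and> u!j = i)"
  note E = f_op_E[OF f]
  note R = rmax[OF E(4), folded r_def]
  have v: "v = u[r := i+1]" using E(5) r_def by simp
  have lu: "length u = length h" using W inW_def by blast
  have lv: "length v = length h" using v lu by simp
  show ?thesis unfolding inW_def
  proof (intro conjI allI impI)
    show "length v = length h" by fact
    fix j k assume jk: "j < k" "k < length h"
    define p where "p = Pl h ! j"
    define q where "q = Pl h ! k"
    have pq: "p < length u" "q < length u" "p \<noteq> q"
      using Pl_lt[of j h] Pl_lt[of k h] Pl_inj[of j h k] jk lu p_def q_def by auto
    have l: "lt u p q" using inW_lt[OF W jk] p_def q_def by simp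
    have vp: "v!p = (if p = r then i+1 else u!p)" "v!q = (if q = r then i+1 else u!q)"
      using v pq by auto
    have np: "\<And>a b. a < b \<Longrightarrow> b < length u \<Longrightarrow> u!a = i+1 \<Longrightarrow> u!b = i \<Longrightarrow> False"
      using nopat_D[OF E(3)] by blast
    have "lt v p q"
    proof (cases "p = r")
      case True
      then have "q \<noteq> r" using pq by simp
      have "\<not> (u!q = i \<and> r < q)" using R(3)[of q] pq by auto
      moreover have "\<not> (u!q = i+1 \<and> q < r)" using np[of q r] R pq by auto
      ultimately show ?thesis using l True vp \<open>q \<noteq> r\<close> pq R unfolding lt_def
        by (auto simp: nat_neq_iff)
    next
      case False
      then show ?thesis using l vp R unfolding lt_def by auto
    qed
    then show "lt v (Pl h ! j) (Pl h ! k)" using p_def q_def by simp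
  qed
qed

lemma f_closed_rev:
  assumes W: "inW h v" and f: "f_op n i u = Some v"
  shows "inW h u"
proof -
  define r where "r = (GREATEST j. j < length u \<and> u!j = i)"
  note E = f_op_E[OF f]
  note R = rmax[OF E(4), folded r_def]
  have v: "v = u[r := i+1]" using E(5) r_def by simp
  have lv: "length v = length h" using W inW_def by blast
  have lu: "length u = length h" using v lv by simp
  show ?thesis unfolding inW_def
  proof (intro conjI allI impI)
    show "length u = length h" by fact
    fix j k assume jk: "j < k" "k < length h"
    define p where "p = Pl h ! j"
    define q where "q = Pl h ! k"
    have pq: "p < length u" "q < length u" "p \<noteq> q"
      using Pl_lt[of j h] Pl_lt[of k h] Pl_inj[of j h k] jk lu p_def q_def by auto
    have l: "lt v p q" using inW_lt[OF W jk] p_def q_def by simp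
    have vp: "v!p = (if p = r then i+1 else u!p)" "v!q = (if q = r then i+1 else u!q)"
      using v pq by auto
    have np: "\<And>a b. a < b \<Longrightarrow> b < length u \<Longrightarrow> u!a = i+1 \<Longrightarrow> u!b = i \<Longrightarrow> False"
      using nopat_D[OF E(3)] by blast
    have "lt u p q"
    proof (cases "q = r")
      case True
      then have "p \<noteq> r" using pq by simp
      have "\<not> (u!p = i+1 \<and> p < r)" using np[of p r] R pq by auto
      moreover have "u!p = i \<Longrightarrow> p < r" using R(3)[of p] pq \<open>p \<noteq> r\<close> by auto
      ultimately show ?thesis using l True vp \<open>p \<noteq> r\<close> pq R unfolding lt_def
        by auto
    next
      case False
      then show ?thesis using l vp R unfolding lt_def by (auto split: if_splits)
    qed
    then show "lt u (Pl h ! j) (Pl h ! k)" using p_def q_def by simp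
  qed
qed

lemma f_rank:
  assumes W: "inW h u" and f: "f_op n i u = Some v"
  shows "\<exists>k<length h. u!(Pl h!k) = i \<and>
     (\<forall>j<length h. v!(Pl h!j) = u!(Pl h!j) + (if j = k then 1 else 0))"
proof -
  define r where "r = (GREATEST j. j < length u \<and> u!j = i)"
  note E = f_op_E[OF f]
  note R = rmax[OF E(4), folded r_def]
  have v: "v = u[r := i+1]" using E(5) r_def by simp
  have lu: "length u = length h" using W inW_def by blast
  obtain k where k: "k < length h" "Pl h ! k = r" using Pl_surj R(1) lu by metis
  have "\<forall>j<length h. v!(Pl h!j) = u!(Pl h!j) + (if j = k then 1 else 0)"
  proof (intro allI impI)
    fix j assume j: "j < length h"
    have "Pl h ! j = r \<longleftrightarrow> j = k" using Pl_inj[OF j k(1)] k by auto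
    then show "v!(Pl h!j) = u!(Pl h!j) + (if j = k then 1 else 0)"
      using v Pl_lt[OF j] lu R k by auto
  qed
  then show ?thesis using k R by auto
qed

lemma word_nth: "is_word n u \<Longrightarrow> p < length u \<Longrightarrow> 1 \<le> u!p \<and> u!p \<le> n"
  unfolding is_word_def using nth_mem by fastforce

lemma edge_of_rank:
  assumes Wu: "inW h u" and Wv: "inW h v" and wu: "is_word n u" and wv: "is_word n v"
    and k: "k < length h"
    and d: "\<And>j. j < length h \<Longrightarrow> v!(Pl h!j) = u!(Pl h!j) + (if j = k then 1 else 0)"
  shows "hypo_edge n u v"
proof -
  define i where "i = u!(Pl h!k)"
  have lu: "length u = length h" using Wu inW_def by blast
  have lv: "length v = length h" using Wv inW_def by blast
  have pk: "Pl h ! k < length u" using Pl_lt[OF k] lu by simp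
  have i1: "1 \<le> i" using word_nth[OF wu pk] i_def by simp
  have vk: "v!(Pl h!k) = i + 1" using d[OF k] i_def by simp
  have "v!(Pl h!k) \<le> n" using word_nth[OF wv, of "Pl h!k"] pk lu lv by simp
  then have i2: "i + 1 \<le> n" using vk by simp
  have i3: "i \<le> n - 1" using i2 by simp
  have iset: "i \<in> set u" using pk i_def by simp
  have big: "i + 1 \<le> u!(Pl h!Suc k)" "u!(Pl h!k) + Dk h k < u!(Pl h!Suc k)" if sk: "Suc k < length h"
  proof -
    have "v!(Pl h!k) + Dk h k \<le> v!(Pl h!Suc k)" using inW_step[OF Wv sk] .
    then show "i + 1 \<le> u!(Pl h!Suc k)" "u!(Pl h!k) + Dk h k < u!(Pl h!Suc k)"
      using d[OF k] d[OF sk] i_def by auto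
  qed
  have np: "\<not> has_pattern i u"
  proof (cases "Suc k < length h")
    case True
    then show ?thesis using nopat[OF Wu True big(2)[OF True]] big(1)[OF True] i_def by simp
  next
    case False
    have "\<forall>p<length u. u!p \<le> i"
    proof (intro allI impI)
      fix p assume "p < length u"
      then obtain j where "j < length h" "Pl h ! j = p" using Pl_surj lu by metis
      then show "u!p \<le> i" using inW_le[OF Wu, of j k] k False i_def by auto
    qed
    then have nn: "\<And>a. a < length u \<Longrightarrow> u!a \<noteq> i+1" by fastforce
    then show ?thesis unfolding has_pattern_def by (meson order.strict_trans)
  qed
  have gr: "(GREATEST j. j < length u \<and> u!j = i) = Pl h ! k"
  proof (rule Greatest_equality)
    show "Pl h ! k < length u \<and> u!(Pl h!k) = i" using pk i_def by simp
    fix y assume y: "y < length u \<and> u!y = i"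
    then obtain j where j: "j < length h" "Pl h ! j = y" using Pl_surj lu by metis
    have "j \<le> k"
    proof (rule ccontr)
      assume "\<not> j \<le> k"
      then have sk: "Suc k < length h" "Suc k \<le> j" using j by auto
      have "u!(Pl h!Suc k) \<le> u!y" using inW_le[OF Wu sk(2) j(1)] j by simp
      then show False using big(1)[OF sk(1)] y by simp
    qed
    then show "y \<le> Pl h ! k" using inW_le_pos[OF Wu _ k, of j] j y i_def by simp
  qed
  have "u[Pl h ! k := i+1] = v"
  proof (rule list_eqI_P[of _ h])
    fix j assume j: "j < length h"
    have "Pl h ! j = Pl h ! k \<longleftrightarrow> j = k" using Pl_inj[OF j k] by auto
    then show "u[Pl h ! k := i+1] ! (Pl h ! j) = v ! (Pl h ! j)"
      using d[OF j] Pl_lt[OF j] lu i_def by auto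
  qed (use lu lv in auto)
  moreover have "f_op n i u = Some (u[Pl h ! k := i+1])"
    unfolding f_op_def using i1 i3 np iset gr by simp
  ultimately have "f_op n i u = Some v" by simp
  then show ?thesis unfolding hypo_edge_def using wu i1 i3 by blast
qed


lemma hw_first:
  assumes W: "inW h u" and w: "is_word n u" and hw: "highest_weight n u" and m: "0 < length h"
  shows "u!(Pl h!0) = 1"
proof (rule ccontr)
  assume ne: "u!(Pl h!0) \<noteq> 1"
  have lu: "length u = length h" using W inW_def by blast
  have p0: "Pl h ! 0 < length u" using Pl_lt[OF m] lu by simp
  define i where "i = u!(Pl h!0) - 1"
  have b: "1 \<le> u!(Pl h!0)" "u!(Pl h!0) \<le> n" using word_nth[OF w p0] by auto
  have i1: "1 \<le> i" "i \<le> n - 1" "i + 1 = u!(Pl h!0)" using b ne i_def by auto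
  have noi: "\<forall>p<length u. u!p \<noteq> i"
  proof (intro allI impI)
    fix p assume "p < length u"
    then obtain j where "j < length h" "Pl h ! j = p" using Pl_surj lu by metis
    then have "u!(Pl h!0) \<le> u!p" using inW_le[OF W, of 0 j] by simp
    then show "u!p \<noteq> i" using i1 by simp
  qed
  have np: "\<not> has_pattern i u" unfolding has_pattern_def using noi by blast
  have "(i+1) \<in> set u" using i1 p0 by (metis nth_mem)
  then have "e_op n i u \<noteq> None" unfolding e_op_def using i1 np by simp
  moreover have "e_op n i u = None" using hw[unfolded highest_weight_def, rule_format, OF conjI[OF i1(1) i1(2)]] .
  ultimately show False by contradiction
qed

lemma hw_step:
  assumes W: "inW h u" and w: "is_word n u" and hw: "highest_weight n u"
    and k: "Suc k < length h"
  shows "u!(Pl h!Suc k) = u!(Pl h!k) + Dk h k"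
proof (rule ccontr)
  assume ne: "u!(Pl h!Suc k) \<noteq> u!(Pl h!k) + Dk h k"
  have lu: "length u = length h" using W inW_def by blast
  have ge: "u!(Pl h!k) + Dk h k \<le> u!(Pl h!Suc k)" using inW_step[OF W k] .
  have pk: "Pl h ! k < length u" "Pl h ! Suc k < length u" using Pl_lt[of k h] Pl_lt[OF k] k lu by auto
  define i where "i = u!(Pl h!Suc k) - 1"
  have b: "1 \<le> u!(Pl h!k)" "u!(Pl h!Suc k) \<le> n" using word_nth[OF w pk(1)] word_nth[OF w pk(2)] by auto
  have gap: "u!(Pl h!k) + Dk h k < u!(Pl h!Suc k)" using ge ne by simp
  have i1: "1 \<le> i" "i \<le> n - 1" "i + 1 = u!(Pl h!Suc k)" "u!(Pl h!k) \<le> i"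
    using b gap i_def by auto
  have np: "\<not> has_pattern i u" using nopat[OF W k gap i1(4)] i1(3) by simp
  have "(i+1) \<in> set u" using i1 pk by (metis nth_mem)
  then have "e_op n i u \<noteq> None" unfolding e_op_def using i1 np by simp
  moreover have "e_op n i u = None" using hw[unfolded highest_weight_def, rule_format, OF conjI[OF i1(1) i1(2)]] .
  ultimately show False by contradiction
qed

lemma lw_last:
  assumes W: "inW h u" and w: "is_word n u" and lw: "lowest_weight n u" and m: "0 < length h"
  shows "u!(Pl h!(length h - 1)) = n"
proof (rule ccontr)
  assume ne: "u!(Pl h!(length h - 1)) \<noteq> n"
  have lu: "length u = length h" using W inW_def by blast
  have mm: "length h - 1 < length h" using m by simp
  have p0: "Pl h ! (length h - 1) < length u" using Pl_lt[OF mm] lu by simp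
  define i where "i = u!(Pl h!(length h - 1))"
  have b: "1 \<le> i" "i \<le> n" using word_nth[OF w p0] i_def by auto
  have i1: "1 \<le> i" "i \<le> n - 1" using b ne i_def by auto
  have noi: "\<forall>p<length u. u!p \<le> i"
  proof (intro allI impI)
    fix p assume "p < length u"
    then obtain j where "j < length h" "Pl h ! j = p" using Pl_surj lu by metis
    then show "u!p \<le> i" using inW_le[OF W, of j "length h - 1"] mm i_def by simp
  qed
  have nn: "\<And>a. a < length u \<Longrightarrow> u!a \<noteq> i+1" using noi by fastforce
  have np: "\<not> has_pattern i u" unfolding has_pattern_def using nn by (meson order.strict_trans)
  have "i \<in> set u" using i_def p0 by (metis nth_mem)
  then have "f_op n i u \<noteq> None" unfolding f_op_def using i1 np by simp
  moreover have "f_op n i u = None" using lw[unfolded lowest_weight_def, rule_format, OF conjI[OF i1(1) i1(2)]] .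
  ultimately show False by contradiction
qed

lemma lw_step:
  assumes W: "inW h u" and w: "is_word n u" and lw: "lowest_weight n u"
    and k: "Suc k < length h"
  shows "u!(Pl h!Suc k) = u!(Pl h!k) + Dk h k"
proof (rule ccontr)
  assume ne: "u!(Pl h!Suc k) \<noteq> u!(Pl h!k) + Dk h k"
  have lu: "length u = length h" using W inW_def by blast
  have ge: "u!(Pl h!k) + Dk h k \<le> u!(Pl h!Suc k)" using inW_step[OF W k] .
  have pk: "Pl h ! k < length u" "Pl h ! Suc k < length u" using Pl_lt[of k h] Pl_lt[OF k] k lu by auto
  define i where "i = u!(Pl h!k)"
  have b: "1 \<le> u!(Pl h!k)" "u!(Pl h!Suc k) \<le> n" using word_nth[OF w pk(1)] word_nth[OF w pk(2)] by auto
  have gap: "u!(Pl h!k) + Dk h k < u!(Pl h!Suc k)" using ge ne by simp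
  have i1: "1 \<le> i" "i \<le> n - 1" "i + 1 \<le> u!(Pl h!Suc k)" "u!(Pl h!k) \<le> i"
    using b gap i_def by auto
  have np: "\<not> has_pattern i u" using nopat[OF W k gap i1(4) i1(3)] .
  have "i \<in> set u" using i_def pk by (metis nth_mem)
  then have "f_op n i u \<noteq> None" unfolding f_op_def using i1 np by simp
  moreover have "f_op n i u = None" using lw[unfolded lowest_weight_def, rule_format, OF conjI[OF i1(1) i1(2)]] .
  ultimately show False by contradiction
qed

definition tt :: "nat \<Rightarrow> nat list \<Rightarrow> nat" where
  "tt n h = n - h!(Pl h!(length h - 1))"

definition Qi :: "nat list \<Rightarrow> nat \<Rightarrow> nat" where
  "Qi h p = (THE k. k < length h \<and> Pl h ! k = p)"

definition phi :: "nat \<Rightarrow> nat list \<Rightarrow> nat list \<Rightarrow> nat list" where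
  "phi n h u = map (\<lambda>p. h!p + tt n h + h!(Pl h!(length h - 1 - Qi h p))
      - u!(Pl h!(length h - 1 - Qi h p))) [0..<length h]"

lemma Qi_P: "k < length h \<Longrightarrow> Qi h (Pl h!k) = k"
  unfolding Qi_def by (rule the_equality) (auto dest: Pl_inj)

lemma phi_nth: "k < length h \<Longrightarrow> phi n h u ! (Pl h!k) =
   h!(Pl h!k) + tt n h + h!(Pl h!(length h - 1 - k)) - u!(Pl h!(length h - 1 - k))"
  unfolding phi_def using Pl_lt[of k h] Qi_P[of k h] by simp

lemma length_phi[simp]: "length (phi n h u) = length h"
  unfolding phi_def by simp

context
  fixes n :: nat and h :: "nat list"
  assumes wh: "is_word n h" and hh: "highest_weight n h"
begin

lemma H0: "0 < length h \<Longrightarrow> h!(Pl h!0) = 1"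
  using hw_first[OF inW_h wh hh] .

lemma Hs: "Suc k < length h \<Longrightarrow> h!(Pl h!Suc k) = h!(Pl h!k) + Dk h k"
  using hw_step[OF inW_h wh hh] .

lemma H_ge1: "k < length h \<Longrightarrow> 1 \<le> h!(Pl h!k)"
  using inW_le[OF inW_h, of 0 k] H0 by fastforce

lemma H_n: "k < length h \<Longrightarrow> h!(Pl h!k) + tt n h \<le> n"
proof -
  assume k: "k < length h"
  have mm: "length h - 1 < length h" using k by simp
  have "h!(Pl h!k) \<le> h!(Pl h!(length h - 1))" using inW_le[OF inW_h, of k "length h - 1"] k by simp
  moreover have "h!(Pl h!(length h - 1)) \<le> n" using word_nth[OF wh] Pl_lt[OF mm] by simp
  ultimately show ?thesis unfolding tt_def by simp
qed

lemma lowerb: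
  assumes W: "inW h u" and w: "is_word n u"
  shows "k < length h \<Longrightarrow> h!(Pl h!k) \<le> u!(Pl h!k)"
proof (induction k)
  case 0
  have lu: "length u = length h" using W inW_def by blast
  then show ?case using H0[OF 0] word_nth[OF w, of "Pl h!0"] Pl_lt[OF 0] by simp
next
  case (Suc k)
  then show ?case using Hs[OF Suc.prems] inW_step[OF W Suc.prems] by simp
qed

lemma upperb:
  assumes W: "inW h u" and w: "is_word n u" and k: "k < length h"
  shows "u!(Pl h!k) \<le> h!(Pl h!k) + tt n h"
proof -
  have lu: "length u = length h" using W inW_def by blast
  have "d < length h \<Longrightarrow> u!(Pl h!(length h - 1 - d)) \<le> h!(Pl h!(length h - 1 - d)) + tt n h" for d
  proof (induction d)
    case 0
    have mm: "length h - 1 < length h" using 0 by simp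
    have "h!(Pl h!(length h - 1)) \<le> n" using word_nth[OF wh] Pl_lt[OF mm] by simp
    moreover have "u!(Pl h!(length h - 1)) \<le> n" using word_nth[OF w] Pl_lt[OF mm] lu by simp
    ultimately show ?case unfolding tt_def by simp
  next
    case (Suc d)
    define j where "j = length h - 1 - Suc d"
    have j: "Suc j < length h" "Suc j = length h - 1 - d" using Suc.prems j_def by auto
    have "u!(Pl h!(Suc j)) \<le> h!(Pl h!(Suc j)) + tt n h" using Suc.IH Suc.prems j by simp
    then show ?case using Hs[OF j(1)] inW_step[OF W j(1)] j_def by simp
  qed
  from this[of "length h - 1 - k"] k show ?thesis by simp
qed

lemma lw_vals:
  assumes W: "inW h u" and w: "is_word n u" and lw: "lowest_weight n u" and k: "k < length h"
  shows "u!(Pl h!k) = h!(Pl h!k) + tt n h"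
proof -
  have "d < length h \<Longrightarrow> u!(Pl h!(length h - 1 - d)) = h!(Pl h!(length h - 1 - d)) + tt n h" for d
  proof (induction d)
    case 0
    have mm: "length h - 1 < length h" using 0 by simp
    have "h!(Pl h!(length h - 1)) \<le> n" using word_nth[OF wh] Pl_lt[OF mm] by simp
    moreover have "u!(Pl h!(length h - 1)) = n" using lw_last[OF W w lw] 0 by simp
    ultimately show ?case unfolding tt_def by simp
  next
    case (Suc d)
    define j where "j = length h - 1 - Suc d"
    have j: "Suc j < length h" "Suc j = length h - 1 - d" using Suc.prems j_def by auto
    have "u!(Pl h!(Suc j)) = h!(Pl h!(Suc j)) + tt n h" using Suc.IH Suc.prems j by simp
    then show ?case using Hs[OF j(1)] lw_step[OF W w lw j(1)] j_def by simp
  qed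
  from this[of "length h - 1 - k"] k show ?thesis by simp
qed

lemma phi_W:
  assumes W: "inW h u" and w: "is_word n u"
  shows "inW h (phi n h u)" "is_word n (phi n h u)"
proof -
  show "inW h (phi n h u)"
  proof (rule inW_I)
    show "length (phi n h u) = length h" by simp
    fix k assume k: "Suc k < length h"
    define a where "a = length h - 1 - k"
    define b where "b = length h - 1 - Suc k"
    have ab1: "a < length h" unfolding a_def using k by linarith
    have ab2: "Suc b = a" unfolding a_def b_def using k by linarith
    have ab3: "Suc b < length h" using ab1 ab2 by simp
    have ab4: "b < length h" using ab3 by simp
    have e1: "h!(Pl h!a) = h!(Pl h!b) + Dk h b" using Hs[OF ab3] unfolding ab2 .
    have e2: "u!(Pl h!b) + Dk h b \<le> u!(Pl h!a)" using inW_step[OF W ab3] unfolding ab2 .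
    have e3: "u!(Pl h!a) \<le> h!(Pl h!a) + tt n h" using upperb[OF W w ab1] .
    have e4: "u!(Pl h!b) \<le> h!(Pl h!b) + tt n h" using upperb[OF W w ab4] .
    have e5: "h!(Pl h!Suc k) = h!(Pl h!k) + Dk h k" using Hs[OF k] .
    have k0: "k < length h" using k by simp
    have p1: "phi n h u ! (Pl h!k) = h!(Pl h!k) + tt n h + h!(Pl h!a) - u!(Pl h!a)"
      using phi_nth[OF k0, of n u] unfolding a_def .
    have p2: "phi n h u ! (Pl h!Suc k) = h!(Pl h!Suc k) + tt n h + h!(Pl h!b) - u!(Pl h!b)"
      using phi_nth[OF k, of n u] unfolding b_def .
    define A where "A = h!(Pl h!a)"
    define B where "B = h!(Pl h!b)"
    define X where "X = u!(Pl h!a)"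
    define Y where "Y = u!(Pl h!b)"
    define K where "K = h!(Pl h!k)"
    define K1 where "K1 = h!(Pl h!Suc k)"
    have "K + tt n h + A - X + Dk h k \<le> K1 + tt n h + B - Y"
      using e1 e2 e3 e4 e5 unfolding A_def B_def X_def Y_def K_def K1_def by arith
    then show "phi n h u ! (Pl h!k) + Dk h k \<le> phi n h u ! (Pl h!Suc k)"
      unfolding p1 p2 A_def B_def X_def Y_def K_def K1_def .
  qed
  show "is_word n (phi n h u)"
    unfolding is_word_def
  proof
    fix x assume "x \<in> set (phi n h u)"
    then obtain p where p: "p < length (phi n h u)" "x = phi n h u ! p"
      unfolding in_set_conv_nth by blast
    have p1: "p < length h" using p(1) by simp
    obtain k where k: "k < length h" "Pl h ! k = p" using Pl_surj[OF p1] by blast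
    define a where "a = length h - 1 - k"
    have a: "a < length h" unfolding a_def using k by linarith
    have e3: "u!(Pl h!a) \<le> h!(Pl h!a) + tt n h" using upperb[OF W w a] .
    have e4: "h!(Pl h!a) \<le> u!(Pl h!a)" using lowerb[OF W w a] .
    have x: "x = h!(Pl h!k) + tt n h + h!(Pl h!a) - u!(Pl h!a)"
      using phi_nth[OF k(1), of n u] unfolding a_def p(2) k(2)[symmetric] .
    have g1: "1 \<le> h!(Pl h!k)" using H_ge1[OF k(1)] .
    have g2: "h!(Pl h!k) + tt n h \<le> n" using H_n[OF k(1)] .
    define A where "A = h!(Pl h!a)"
    define X where "X = u!(Pl h!a)"
    define K where "K = h!(Pl h!k)"
    have "1 \<le> K + tt n h + A - X \<and> K + tt n h + A - X \<le> n"
      using e3 e4 g1 g2 unfolding A_def X_def K_def by arith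
    then show "x \<in> {1..n}" using x unfolding A_def X_def K_def by simp
  qed
qed

lemma phi_invol:
  assumes W: "inW h u" and w: "is_word n u"
  shows "phi n h (phi n h u) = u"
proof (rule list_eqI_P[of _ h])
  show "length (phi n h (phi n h u)) = length h" by simp
  show "length u = length h" using W inW_def by blast
  fix k assume k: "k < length h"
  define a where "a = length h - 1 - k"
  have a: "a < length h" "length h - 1 - a = k" using k a_def by auto
  have e3: "u!(Pl h!k) \<le> h!(Pl h!k) + tt n h" using upperb[OF W w k] .
  have "phi n h (phi n h u) ! (Pl h!k) = h!(Pl h!k) + tt n h + h!(Pl h!a) - phi n h u ! (Pl h!a)"
    using phi_nth[OF k] a_def by simp
  also have "phi n h u ! (Pl h!a) = h!(Pl h!a) + tt n h + h!(Pl h!k) - u!(Pl h!k)"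
    using phi_nth[OF a(1)] a(2) by simp
  finally show "phi n h (phi n h u) ! (Pl h!k) = u ! (Pl h!k)" using e3 by simp
qed

lemma phi_h_low:
  assumes W: "inW h l" and w: "is_word n l" and lw: "lowest_weight n l"
  shows "phi n h h = l"
proof (rule list_eqI_P[of _ h])
  show "length (phi n h h) = length h" by simp
  show "length l = length h" using W inW_def by blast
  fix k assume k: "k < length h"
  show "phi n h h ! (Pl h!k) = l ! (Pl h!k)"
    using phi_nth[OF k, of n h] lw_vals[OF W w lw k] by simp
qed

lemma phi_edge:
  assumes Wu: "inW h u" and wu: "is_word n u" and Wv: "inW h v" and wv: "is_word n v"
    and e: "hypo_edge n u v"
  shows "hypo_edge n (phi n h v) (phi n h u)"
proof -
  obtain i where i: "f_op n i u = Some v" using e unfolding hypo_edge_def by blast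
  obtain k where k: "k < length h"
    and d: "\<forall>j<length h. v!(Pl h!j) = u!(Pl h!j) + (if j = k then 1 else 0)"
    using f_rank[OF Wu i] by blast
  note PW = phi_W[OF Wu wu] phi_W[OF Wv wv]
  show ?thesis
  proof (rule edge_of_rank[OF PW(3) PW(1) PW(4) PW(2), of "length h - 1 - k"])
    show "length h - 1 - k < length h" using k by simp
    fix j assume j: "j < length h"
    define a where "a = length h - 1 - j"
    have a: "a < length h" using j a_def by simp
    have ak: "a = k \<longleftrightarrow> j = length h - 1 - k" using a_def j k by auto
    have va: "v!(Pl h!a) = u!(Pl h!a) + (if a = k then 1 else 0)" using d a by blast
    have e3: "v!(Pl h!a) \<le> h!(Pl h!a) + tt n h" using upperb[OF Wv wv a] .
    have p1: "phi n h u ! (Pl h!j) = h!(Pl h!j) + tt n h + h!(Pl h!a) - u!(Pl h!a)"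
      using phi_nth[OF j] a_def by simp
    have p2: "phi n h v ! (Pl h!j) = h!(Pl h!j) + tt n h + h!(Pl h!a) - v!(Pl h!a)"
      using phi_nth[OF j] a_def by simp
    show "phi n h u ! (Pl h!j) = phi n h v ! (Pl h!j) + (if j = length h - 1 - k then 1 else 0)"
      unfolding p1 p2 using va e3 ak by auto
  qed
qed

lemma phi_adj:
  assumes Wu: "inW h u" and wu: "is_word n u" and Wv: "inW h v" and wv: "is_word n v"
    and e: "hypo_adj n u v"
  shows "hypo_adj n (phi n h u) (phi n h v)"
  using e phi_edge[OF Wu wu Wv wv] phi_edge[OF Wv wv Wu wu] unfolding hypo_adj_def by blast

end

lemma adj_word: "is_word n x \<Longrightarrow> hypo_adj n x y \<Longrightarrow> is_word n y"
proof -
  assume wx: "is_word n x" and a: "hypo_adj n x y"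
  show "is_word n y"
  proof (cases "hypo_edge n x y")
    case True
    then obtain i where i: "f_op n i x = Some y" unfolding hypo_edge_def by blast
    note E = f_op_E[OF i]
    have "set y \<subseteq> insert (i+1) (set x)" using E(5) set_update_subset_insert by metis
    moreover have "i + 1 \<in> {1..n}" using E(1,2) wx E(4) unfolding is_word_def
      by (cases n) auto
    ultimately show ?thesis using wx unfolding is_word_def by blast
  next
    case False
    then show ?thesis using a unfolding hypo_adj_def hypo_edge_def by blast
  qed
qed

lemma adj_W: "inW h x \<Longrightarrow> hypo_adj n x y \<Longrightarrow> inW h y"
  unfolding hypo_adj_def hypo_edge_def using f_closed f_closed_rev by blast

theorem corollary4p8:
  fixes n :: nat and C :: "nat list set" and h l :: "nat list"
  assumes "n \<ge> 1"
    and "hypo_component n C"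
    and "h \<in> C" and "highest_weight n h"
    and "l \<in> C" and "lowest_weight n l"
  shows "\<exists>\<phi>. is_undirected_aut n C \<phi> \<and> \<phi> h = l"
proof -
  define R where "R = {(x, y). hypo_adj n x y}"
  obtain u0 where u0: "is_word n u0" "C = {v. (u0, v) \<in> R\<^sup>*}"
    using assms(2) unfolding hypo_component_def R_def by blast
  have symR: "sym R" unfolding R_def sym_def hypo_adj_def by blast
  have wreach: "(x, y) \<in> R\<^sup>* \<Longrightarrow> is_word n x \<Longrightarrow> is_word n y" for x y
  proof (induction rule: rtrancl_induct)
    case base then show ?case .
  next
    case (step y z) then show ?case using adj_word unfolding R_def by blast
  qed
  have u0h: "(u0, h) \<in> R\<^sup>*" using assms(3) u0 by blast
  have hu0: "(h, u0) \<in> R\<^sup>*" using symD[OF sym_rtrancl[OF symR] u0h] .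
  have Ch: "C = {v. (h, v) \<in> R\<^sup>*}"
  proof (intro set_eqI iffI)
    fix v assume "v \<in> C"
    then have "(u0, v) \<in> R\<^sup>*" using u0(2) by simp
    then show "v \<in> {v. (h, v) \<in> R\<^sup>*}" using rtrancl_trans[OF hu0] by simp
  next
    fix v assume "v \<in> {v. (h, v) \<in> R\<^sup>*}"
    then have "(h, v) \<in> R\<^sup>*" by simp
    then show "v \<in> C" using rtrancl_trans[OF u0h] u0(2) by simp
  qed
  have wh: "is_word n h" using wreach[OF u0h u0(1)] .
  have reachW: "(h, v) \<in> R\<^sup>* \<Longrightarrow> inW h v \<and> is_word n v" for v
  proof (induction rule: rtrancl_induct)
    case base then show ?case using inW_h wh by simp
  next
    case (step y z) then show ?case using adj_word adj_W unfolding R_def by blast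
  qed
  have hl: "(h, l) \<in> R\<^sup>*" using assms(5) Ch by blast
  have Wl: "inW h l" "is_word n l" using reachW[OF hl] by auto
  have phl: "phi n h h = l" using phi_h_low[OF wh assms(4) Wl assms(6)] .
  have preach: "(h, v) \<in> R\<^sup>* \<Longrightarrow> (phi n h h, phi n h v) \<in> R\<^sup>*" for v
  proof (induction rule: rtrancl_induct)
    case base then show ?case by simp
  next
    case (step y z)
    have "hypo_adj n (phi n h y) (phi n h z)"
      using phi_adj[OF wh assms(4)] reachW[OF step.hyps(1)]
        reachW[OF rtrancl_into_rtrancl[OF step.hyps(1) step.hyps(2)]] step.hyps(2)
      unfolding R_def by blast
    then show ?case using step.IH unfolding R_def by (simp add: rtrancl_into_rtrancl)
  qed
  have inC: "v \<in> C \<Longrightarrow> phi n h v \<in> C" for v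
  proof -
    assume "v \<in> C"
    then have "(h, v) \<in> R\<^sup>*" using Ch by simp
    then have "(l, phi n h v) \<in> R\<^sup>*" using preach phl by metis
    then have "(h, phi n h v) \<in> R\<^sup>*" using rtrancl_trans[OF hl] by simp
    then show ?thesis using Ch by simp
  qed
  have inv: "v \<in> C \<Longrightarrow> phi n h (phi n h v) = v" for v
    using phi_invol[OF wh assms(4)] reachW Ch by blast
  have WC: "v \<in> C \<Longrightarrow> inW h v \<and> is_word n v" for v using reachW Ch by blast
  have "is_undirected_aut n C (phi n h)"
    unfolding is_undirected_aut_def
  proof (intro conjI ballI)
    show "bij_betw (phi n h) C C"
      by (rule bij_betw_byWitness[where f' = "phi n h"]) (use inv inC in auto)
    fix u v assume uv: "u \<in> C" "v \<in> C"
    show "hypo_adj n u v \<longleftrightarrow> hypo_adj n (phi n h u) (phi n h v)"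
    proof
      assume "hypo_adj n u v"
      then show "hypo_adj n (phi n h u) (phi n h v)"
        using phi_adj[OF wh assms(4)] WC uv by blast
    next
      assume "hypo_adj n (phi n h u) (phi n h v)"
      then have "hypo_adj n (phi n h (phi n h u)) (phi n h (phi n h v))"
        using phi_adj[OF wh assms(4)] WC inC uv by blast
      then show "hypo_adj n u v" using inv uv by simp
    qed
  qed
  then show ?thesis using phl by blast
qed

end
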